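(* Let $m,n\in\mathbb{Z}^+$ be relatively prime and $j\in\{0,1,\dots,m-1\}$. If $(\beta_1,\beta_2)\in\mathbb{Z}^2$ is such that both $(\beta_1,\beta_2)$ and $(\beta_1,-\beta_2)$ belong to $\mathcal{G}_j$, then there exists a constant $C$ such that for all $l\in\{0,1,\dots,m-1\}$, $$\mathcal{K}_l\left(z_1^{\beta_1}\bar z_2^{\,\beta_2}\right)=\begin{cases}C\,z_1^{\beta_1}z_2^{-\beta_2}, & l=j,\\ 0, & l\ne j.\end{cases}$$
   Context: $\mathbb{H}_{m/n}=\{(z_1,z_2)\in\mathbb{C}^2:|z_1|^{m/n}<|z_2|<1\}$. Let $\mathcal{A}^2_{m/n}=\{(\alpha_1,\alpha_2)\in\mathbb{Z}^2:\alpha_1\ge0,\ n\alpha_1+m\alpha_2\ge -m-n+1\}$ (exactly the $\alpha$ with $z^\alpha=z_1^{\alpha_1}z_2^{\alpha_2}$ holomorphic and square integrable w.r.t. Lebesgue measure on $\mathbb{H}_{m/n}$). For $l\in\{0,\dots,m-1\}$ let $\mathcal{G}_l=\{\alpha\in\mathcal{A}^2_{m/n}:\alpha_1\equiv l\pmod m\}$, $\mathcal{S}_l$ the closed span of $\{z^\alpha:\alpha\in\mathcal{G}_l\}$ in $L^2(\mathbb{H}_{m/n})$, and $\mathcal{K}_l$ the orthogonal projection of $L^2(\mathbb{H}_{m/n})$ onto $\mathcal{S}_l$, i.e. $\mathcal{K}_lf(z)=\int K_l(z,w)f(w)\,dV(w)$ with $K_l(z,w)=\sum_{\alpha\in\mathcal{G}_l}z^\alpha\bar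 w^\alpha/\|z^\alpha\|^2_{L^2}$. *)

theory Defs
  imports "HOL-Analysis.Analysis"
begin

definition Hdom :: "nat \<Rightarrow> nat \<Rightarrow> (complex \<times> complex) set" where
  "Hdom m n = {(z1, z2). norm z1 powr (real m / real n) < norm z2 \<and> norm z2 < 1}"

definition A2 :: "nat \<Rightarrow> nat \<Rightarrow> (int \<times> int) set" where
  "A2 m n = {(a1, a2). a1 \<ge> 0 \<and> int n * a1 + int m * a2 \<ge> - int m - int n + 1}"

definition Gset :: "nat \<Rightarrow> nat \<Rightarrow> nat \<Rightarrow> (int \<times> int) set" where
  "Gset m n l = {a \<in> A2 m n. fst a mod int m = int l mod int m}"

definition mono :: "int \<times> int \<Rightarrow> complex \<times> complex \<Rightarrow> complex" where
  "mono a z = fst z powi fst a * snd z powi snd a"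

definition mono_norm2 :: "nat \<Rightarrow> nat \<Rightarrow> int \<times> int \<Rightarrow> real" where
  "mono_norm2 m n a = (LINT w:Hdom m n|lborel. (cmod (mono a w))\<^sup>2)"

definition Kker :: "nat \<Rightarrow> nat \<Rightarrow> nat \<Rightarrow> complex \<times> complex \<Rightarrow> complex \<times> complex \<Rightarrow> complex" where
  "Kker m n l z w = (\<Sum>\<^sub>\<infinity> a \<in> Gset m n l. mono a z * cnj (mono a w) / complex_of_real (mono_norm2 m n a))"

definition Kop :: "nat \<Rightarrow> nat \<Rightarrow> nat \<Rightarrow> (complex \<times> complex \<Rightarrow> complex) \<Rightarrow> complex \<times> complex \<Rightarrow> complex" where
  "Kop m n l f z = (LINT w:Hdom m n|lborel. Kker m n l z w * f w)"

end

theory Submission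
  imports Defs
begin

lemma powi_meas[measurable]: "(\<lambda>x::complex. x powi k) \<in> borel_measurable borel"
proof (cases "0 \<le> k")
  case True then show ?thesis by (simp add: power_int_def)
next
  case False then show ?thesis by (simp add: power_int_def)
qed
lemma fst_meas[measurable]: "(fst :: complex\<times>complex \<Rightarrow> complex) \<in> borel_measurable borel"
  by (intro borel_measurable_continuous_onI continuous_intros)
lemma snd_meas[measurable]: "(snd :: complex\<times>complex \<Rightarrow> complex) \<in> borel_measurable borel"
  by (intro borel_measurable_continuous_onI continuous_intros)
lemma cnj_meas[measurable]: "(cnj :: complex \<Rightarrow> complex) \<in> borel_measurable borel"
  by (intro borel_measurable_continuous_onI continuous_intros)
lemma "(\<lambda>w::complex\<times>complex. fst w powi (k::int) * cnj (snd w) powi j) \<in> borel_measurable borel"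
  by measurable
lemma "(\<lambda>w::complex\<times>complex. fst w powi (k::int) * cnj (snd w) powi j) \<in> borel_measurable lborel"
  by measurable
lemma Hdom_meas[measurable]: "Hdom m n \<in> sets lborel"
  unfolding Hdom_def by measurable
lemma Hdom_meas'[measurable]: "Hdom m n \<in> sets borel"
  unfolding Hdom_def by measurable


lemma Complex_meas[measurable]: "(\<lambda>(x,y). Complex x y) \<in> borel_measurable (borel \<Otimes>\<^sub>M borel)"
proof -
  have "(\<lambda>p::real\<times>real. Complex (fst p) (snd p)) = (\<lambda>p. complex_of_real (fst p) + \<i> * complex_of_real (snd p))"
    by (auto simp: complex_eq_iff)
  moreover have "(\<lambda>p::real\<times>real. complex_of_real (fst p) + \<i> * complex_of_real (snd p)) \<in> borel_measurable (borel \<Otimes>\<^sub>M borel)"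
    by measurable
  ultimately show ?thesis by (simp add: case_prod_beta')
qed

lemma lborel_complex: "distr (lborel \<Otimes>\<^sub>M lborel) borel (\<lambda>(x,y). Complex x y) = (lborel :: complex measure)"
proof (rule lborel_eqI[symmetric])
  fix l u :: complex
  assume le: "\<And>b. b \<in> Basis \<Longrightarrow> l \<bullet> b \<le> u \<bullet> b"
  have le1: "Re l \<le> Re u" using le[of 1] by (simp add: Basis_complex_def)
  have le2: "Im l \<le> Im u" using le[of \<i>] by (simp add: Basis_complex_def)
  have pre: "(\<lambda>(x,y). Complex x y) -` box l u \<inter> space (lborel \<Otimes>\<^sub>M lborel) = {Re l<..<Re u} \<times> {Im l<..<Im u}"
    by (auto simp: box_def Basis_complex_def space_pair_measure)
  have "emeasure (distr (lborel \<Otimes>\<^sub>M lborel) borel (\<lambda>(x,y). Complex x y)) (box l u)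
      = emeasure (lborel \<Otimes>\<^sub>M lborel) ({Re l<..<Re u} \<times> {Im l<..<Im u})"
    by (subst emeasure_distr) (auto simp: pre simp del: space_lborel)
  also have "\<dots> = ennreal (Re u - Re l) * ennreal (Im u - Im l)"
    using le1 le2 by (simp add: lborel.emeasure_pair_measure_Times)
  also have "\<dots> = ennreal (\<Prod>b\<in>Basis. (u - l) \<bullet> b)"
    using le1 le2 by (simp add: Basis_complex_def ennreal_mult)
  finally show "emeasure (distr (lborel \<Otimes>\<^sub>M lborel) borel (\<lambda>(x,y). Complex x y)) (box l u) = (\<Prod>b\<in>Basis. (u - l) \<bullet> b)" .
qed simp

lemma nn_integral_complex:
  assumes [measurable]: "g \<in> borel_measurable (borel :: complex measure)"
  shows "(\<integral>\<^sup>+w. g w \<partial>lborel) = (\<integral>\<^sup>+y. \<integral>\<^sup>+x. g (Complex x y) \<partial>lborel \<partial>lborel)"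
proof -
  have "(\<integral>\<^sup>+w. g w \<partial>lborel) = (\<integral>\<^sup>+w. g w \<partial>distr (lborel \<Otimes>\<^sub>M lborel) borel (\<lambda>(x,y). Complex x y))"
    by (simp add: lborel_complex)
  also have "\<dots> = (\<integral>\<^sup>+p. g (case p of (x,y) \<Rightarrow> Complex x y) \<partial>(lborel \<Otimes>\<^sub>M lborel))"
    by (subst nn_integral_distr) (auto simp: borel_prod)
  also have "\<dots> = (\<integral>\<^sup>+y. \<integral>\<^sup>+x. g (Complex x y) \<partial>lborel \<partial>lborel)"
    by (subst lborel_pair.nn_integral_snd[symmetric]) (auto simp: borel_prod)
  finally show ?thesis .
qed



lemma nn_integral_translate:
  fixes f :: "real \<Rightarrow> ennreal"
  assumes [measurable]: "f \<in> borel_measurable borel"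
  shows "(\<integral>\<^sup>+x. f (x + c) \<partial>lborel) = (\<integral>\<^sup>+x. f x \<partial>lborel)"
  using nn_integral_real_affine[OF assms, of 1 c] by (simp add: add.commute)

lemma shear1:
  assumes [measurable]: "g \<in> borel_measurable (borel :: complex measure)"
  shows "(\<integral>\<^sup>+w. g (Complex (Re w + t * Im w) (Im w)) \<partial>lborel) = (\<integral>\<^sup>+w. g w \<partial>lborel)"
proof -
  have "(\<integral>\<^sup>+w. g (Complex (Re w + t * Im w) (Im w)) \<partial>lborel)
      = (\<integral>\<^sup>+y. \<integral>\<^sup>+x. g (Complex (x + t * y) y) \<partial>lborel \<partial>lborel)"
    by (subst nn_integral_complex) auto
  also have "\<dots> = (\<integral>\<^sup>+y. \<integral>\<^sup>+x. g (Complex x y) \<partial>lborel \<partial>lborel)"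
    by (intro nn_integral_cong nn_integral_translate[where f="\<lambda>x. g (Complex x y)" for y]) measurable
  also have "\<dots> = (\<integral>\<^sup>+w. g w \<partial>lborel)"
    by (subst nn_integral_complex) auto
  finally show ?thesis .
qed

lemma shear2:
  assumes [measurable]: "g \<in> borel_measurable (borel :: complex measure)"
  shows "(\<integral>\<^sup>+w. g (Complex (Re w) (Im w + s * Re w)) \<partial>lborel) = (\<integral>\<^sup>+w. g w \<partial>lborel)"
proof -
  have "(\<integral>\<^sup>+w. g (Complex (Re w) (Im w + s * Re w)) \<partial>lborel)
      = (\<integral>\<^sup>+y. \<integral>\<^sup>+x. g (Complex x (y + s * x)) \<partial>lborel \<partial>lborel)"
    by (subst nn_integral_complex) auto
  also have "\<dots> = (\<integral>\<^sup>+x. \<integral>\<^sup>+y. g (Complex x (y + s * x)) \<partial>lborel \<partial>lborel)"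
    by (rule lborel_pair.Fubini') measurable
  also have "\<dots> = (\<integral>\<^sup>+x. \<integral>\<^sup>+y. g (Complex x y) \<partial>lborel \<partial>lborel)"
    by (intro nn_integral_cong nn_integral_translate[where f="\<lambda>y. g (Complex x y)" for x]) measurable
  also have "\<dots> = (\<integral>\<^sup>+y. \<integral>\<^sup>+x. g (Complex x y) \<partial>lborel \<partial>lborel)"
    by (rule lborel_pair.Fubini'[symmetric]) measurable
  also have "\<dots> = (\<integral>\<^sup>+w. g w \<partial>lborel)"
    by (subst nn_integral_complex) auto
  finally show ?thesis .
qed

lemma rotation_nn:
  fixes c :: complex
  assumes c: "cmod c = 1" "c \<noteq> -1" and [measurable]: "g \<in> borel_measurable (borel :: complex measure)"
  shows "(\<integral>\<^sup>+w. g (c * w) \<partial>lborel) = (\<integral>\<^sup>+w. g w \<partial>lborel)"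
proof -
  define a b where "a = Re c" "b = Im c"
  have ab: "a\<^sup>2 + b\<^sup>2 = 1" using c(1) unfolding a_b_def cmod_def by simp
  have a1: "1 + a \<noteq> 0"
  proof
    assume "1 + a = 0"
    then have "a = -1" by simp
    with ab have "b = 0" by simp
    with \<open>a = -1\<close> have "c = -1" unfolding a_b_def by (simp add: complex_eq_iff)
    with c(2) show False by simp
  qed
  define t where "t = b / (1 + a)"
  define S1 where "S1 = (\<lambda>w. Complex (Re w + (-t) * Im w) (Im w))"
  define S2 where "S2 = (\<lambda>w. Complex (Re w) (Im w + b * Re w))"
  have S1m[measurable]: "S1 \<in> borel_measurable borel"
    unfolding S1_def by (intro borel_measurable_continuous_onI continuous_intros)
  have S2m[measurable]: "S2 \<in> borel_measurable borel"
    unfolding S2_def by (intro borel_measurable_continuous_onI continuous_intros)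
  have ts: "1 - t * b = a"
  proof -
    have "1 - t * b = (1 + a - b\<^sup>2) / (1 + a)" using a1 by (simp add: t_def field_simps power2_eq_square)
    also have "1 + a - b\<^sup>2 = a * (1 + a)" using ab by (simp add: algebra_simps power2_eq_square)
    finally show ?thesis using a1 by simp
  qed
  have tb: "t * (1 + a) = b" using a1 by (simp add: t_def)
  have rot: "c * w = S1 (S2 (S1 w))" for w
  proof -
    have c_eq: "c = Complex a b" unfolding a_b_def by simp
    define x y where "x = Re w" "y = Im w"
    have w_eq: "w = Complex x y" unfolding x_y_def by simp
    have e1: "(x - t*y) - t*(y + b*(x - t*y)) = x*(1 - t*b) - y*(t*(1 + (1 - t*b)))"
      by (simp add: algebra_simps)
    have e2: "y + b*(x - t*y) = b*x + y*(1 - t*b)"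
      by (simp add: algebra_simps)
    have ha: "a = 1 - t*b" using ts by simp
    have hb: "b*(1 + t*t) = 2*t"
    proof -
      have "b = t*(1 + a)" using tb by simp
      also have "\<dots> = t*(2 - t*b)" by (simp add: ha)
      finally show ?thesis by (simp add: algebra_simps)
    qed
    have hb2: "b*y + b*(t*(t*y)) = y*(2*t)"
    proof -
      have "b*y + b*(t*(t*y)) = y*(b*(1+t*t))" by (simp add: algebra_simps)
      also have "\<dots> = y*(2*t)" by (simp add: hb)
      finally show ?thesis .
    qed
    have g1: "a * x + (b * (t * x) + t * (y * 2)) = x + (b * y + b * (t * (t * y)))"
      unfolding hb2 ha by (simp add: algebra_simps)
    have g2: "a * y + b * (t * y) = y"
      unfolding ha by (simp add: algebra_simps)
    show ?thesis unfolding S1_def S2_def c_eq w_eq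
      by (simp add: complex_eq_iff algebra_simps g1 g2)
  qed
  have "(\<integral>\<^sup>+w. g (c * w) \<partial>lborel) = (\<integral>\<^sup>+w. (g \<circ> S1 \<circ> S2) (S1 w) \<partial>lborel)"
    by (simp add: rot)
  also have "\<dots> = (\<integral>\<^sup>+w. (g \<circ> S1 \<circ> S2) w \<partial>lborel)"
    unfolding S1_def by (rule shear1) measurable
  also have "\<dots> = (\<integral>\<^sup>+w. (g \<circ> S1) (S2 w) \<partial>lborel)" by simp
  also have "\<dots> = (\<integral>\<^sup>+w. (g \<circ> S1) w \<partial>lborel)"
    unfolding S2_def by (rule shear2) measurable
  also have "\<dots> = (\<integral>\<^sup>+w. g (S1 w) \<partial>lborel)" by simp
  also have "\<dots> = (\<integral>\<^sup>+w. g w \<partial>lborel)"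
    unfolding S1_def by (rule shear1) measurable
  finally show ?thesis .
qed



lemma distr_rot:
  fixes c :: complex
  assumes c: "cmod c = 1" "c \<noteq> -1"
  shows "distr lborel borel (\<lambda>w. c * w) = lborel"
proof (rule measure_eqI)
  show "sets (distr lborel borel (\<lambda>w. c * w)) = sets lborel" by simp
  fix A assume A: "A \<in> sets (distr lborel borel (\<lambda>w. c * w))"
  then have [measurable]: "A \<in> sets borel" by simp
  have cm: "(\<lambda>w::complex. c*w) \<in> borel_measurable borel"
    by (intro borel_measurable_continuous_onI continuous_intros)
  have mA: "(\<lambda>w. c * w) -` A \<in> sets lborel"
    using measurable_sets_borel[OF cm \<open>A \<in> sets borel\<close>] by simp
  have "emeasure (distr lborel borel (\<lambda>w. c * w)) A = emeasure lborel ((\<lambda>w. c * w) -` A)"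
    by (subst emeasure_distr) auto
  also have "\<dots> = (\<integral>\<^sup>+w. indicator ((\<lambda>w. c * w) -` A) w \<partial>lborel)"
    by (rule nn_integral_indicator[symmetric, OF mA])
  also have "\<dots> = (\<integral>\<^sup>+w. indicator A (c * w) \<partial>lborel)"
    by (intro nn_integral_cong) (auto simp: indicator_def)
  also have "\<dots> = (\<integral>\<^sup>+w. indicator A w \<partial>lborel)"
    by (rule rotation_nn[OF c]) measurable
  also have "\<dots> = emeasure lborel A" by simp
  finally show "emeasure (distr lborel borel (\<lambda>w. c * w)) A = emeasure lborel A" .
qed

lemma distr_rot1:
  fixes c :: complex
  assumes c: "cmod c = 1" "c \<noteq> -1"
  shows "distr lborel borel (\<lambda>(x::complex, y::complex). (c * x, y)) = lborel"
proof -
  have id: "distr lborel borel (\<lambda>w::complex. 1 * w) = lborel" by (rule distr_rot) auto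
  then have id': "distr lborel borel (\<lambda>w::complex. w) = lborel" by simp
  have "distr lborel borel (\<lambda>(x::complex, y::complex). (c * x, y))
      = distr (lborel \<Otimes>\<^sub>M lborel) (borel \<Otimes>\<^sub>M borel) (\<lambda>(x::complex, y::complex). (c * x, 1 * y))"
    by (simp add: lborel_prod borel_prod)
  also have "\<dots> = distr lborel borel (\<lambda>w::complex. c * w) \<Otimes>\<^sub>M distr lborel borel (\<lambda>w::complex. 1 * w)"
    by (rule pair_measure_distr[symmetric]) (auto simp: id' intro: lborel.sigma_finite_measure_axioms)
  also have "\<dots> = lborel"
    by (simp only: distr_rot[OF c] id lborel_prod)
  finally show ?thesis .
qed

lemma distr_rot2:
  fixes c :: complex
  assumes c: "cmod c = 1" "c \<noteq> -1"
  shows "distr lborel borel (\<lambda>(x::complex, y::complex). (x, c * y)) = lborel"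
proof -
  have id: "distr lborel borel (\<lambda>w::complex. 1 * w) = lborel" by (rule distr_rot) auto
  then have id': "distr lborel borel (\<lambda>w::complex. w) = lborel" by simp
  have "distr lborel borel (\<lambda>(x::complex, y::complex). (x, c * y))
      = distr (lborel \<Otimes>\<^sub>M lborel) (borel \<Otimes>\<^sub>M borel) (\<lambda>(x::complex, y::complex). (1 * x, c * y))"
    by (simp add: lborel_prod borel_prod)
  also have "\<dots> = distr lborel borel (\<lambda>w::complex. 1 * w) \<Otimes>\<^sub>M distr lborel borel (\<lambda>w::complex. c * w)"
    by (rule pair_measure_distr[symmetric]) (auto simp: distr_rot[OF c] intro: lborel.sigma_finite_measure_axioms)
  also have "\<dots> = lborel"
    by (simp only: distr_rot[OF c] id lborel_prod)
  finally show ?thesis .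
qed

lemma integral_rot1:
  fixes c :: complex and h :: "complex \<times> complex \<Rightarrow> complex"
  assumes c: "cmod c = 1" "c \<noteq> -1" and [measurable]: "h \<in> borel_measurable borel"
  shows "(\<integral>w. h (c * fst w, snd w) \<partial>lborel) = (\<integral>w. h w \<partial>lborel)"
proof -
  have m: "(\<lambda>(x::complex, y::complex). (c * x, y)) \<in> borel \<rightarrow>\<^sub>M borel"
    by (simp add: case_prod_beta')
  have "(\<integral>w. h w \<partial>lborel) = (\<integral>w. h w \<partial>distr lborel borel (\<lambda>(x::complex, y::complex). (c * x, y)))"
    by (simp add: distr_rot1[OF c])
  also have "\<dots> = (\<integral>w. h (case w of (x, y) \<Rightarrow> (c * x, y)) \<partial>lborel)"
    using m by (intro integral_distr) auto
  finally show ?thesis by (simp add: case_prod_beta')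
qed

lemma integral_rot2:
  fixes c :: complex and h :: "complex \<times> complex \<Rightarrow> complex"
  assumes c: "cmod c = 1" "c \<noteq> -1" and [measurable]: "h \<in> borel_measurable borel"
  shows "(\<integral>w. h (fst w, c * snd w) \<partial>lborel) = (\<integral>w. h w \<partial>lborel)"
proof -
  have m: "(\<lambda>(x::complex, y::complex). (x, c * y)) \<in> borel \<rightarrow>\<^sub>M borel"
    by (simp add: case_prod_beta')
  have "(\<integral>w. h w \<partial>lborel) = (\<integral>w. h w \<partial>distr lborel borel (\<lambda>(x::complex, y::complex). (x, c * y)))"
    by (simp add: distr_rot2[OF c])
  also have "\<dots> = (\<integral>w. h (case w of (x, y) \<Rightarrow> (x, c * y)) \<partial>lborel)"
    using m by (intro integral_distr) auto
  finally show ?thesis by (simp add: case_prod_beta')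
qed



definition fb :: "int \<Rightarrow> int \<Rightarrow> complex \<times> complex \<Rightarrow> complex" where
  "fb b1 b2 w = fst w powi b1 * cnj (snd w) powi b2"

definition ha :: "nat \<Rightarrow> nat \<Rightarrow> int \<times> int \<Rightarrow> int \<Rightarrow> int \<Rightarrow> complex \<times> complex \<Rightarrow> complex" where
  "ha m n a b1 b2 w = indicator (Hdom m n) w * (cnj (mono a w) * fb b1 b2 w)"

lemma ha_meas[measurable]: "ha m n a b1 b2 \<in> borel_measurable borel"
  unfolding ha_def fb_def mono_def by measurable

lemma exists_theta:
  fixes k :: int assumes "k \<noteq> 0"
  shows "\<exists>\<theta>. cis \<theta> \<noteq> -1 \<and> cis (of_int k * \<theta>) \<noteq> 1"
proof -
  define \<theta> where "\<theta> = pi / (\<bar>real_of_int k\<bar> + 1)"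
  have kpos: "\<bar>real_of_int k\<bar> \<ge> 1" using assms by linarith
  have t0: "0 < \<theta>" "\<theta> < pi" using kpos by (auto simp: \<theta>_def field_simps)
  have "sin \<theta> > 0" using t0 by (intro sin_gt_zero) auto
  then have "cis \<theta> \<noteq> -1" by (auto simp: complex_eq_iff)
  moreover have "sin (\<bar>real_of_int k\<bar> * \<theta>) > 0"
  proof (intro sin_gt_zero)
    show "0 < \<bar>real_of_int k\<bar> * \<theta>" using t0 kpos by simp
    show "\<bar>real_of_int k\<bar> * \<theta> < pi" using kpos by (simp add: \<theta>_def field_simps)
  qed
  then have "sin (real_of_int k * \<theta>) \<noteq> 0"
    by (cases "k \<ge> 0") auto
  then have "cis (of_int k * \<theta>) \<noteq> 1" by (auto simp: complex_eq_iff)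
  ultimately show ?thesis by blast
qed

lemma Hdom_rot1: "((cis t * fst w, snd w) \<in> Hdom m n) = (w \<in> Hdom m n)"
  by (cases w) (simp add: Hdom_def norm_mult)
lemma Hdom_rot2: "((fst w, cis t * snd w) \<in> Hdom m n) = (w \<in> Hdom m n)"
  by (cases w) (simp add: Hdom_def norm_mult)

lemma ind_rot1: "indicator (Hdom m n) (cis t * fst w, snd w) = (indicator (Hdom m n) w :: complex)"
  by (simp add: indicator_def Hdom_rot1)
lemma ind_rot2: "indicator (Hdom m n) (fst w, cis t * snd w) = (indicator (Hdom m n) w :: complex)"
  by (simp add: indicator_def Hdom_rot2)

lemma ha_rot1: "ha m n a b1 b2 (cis t * fst w, snd w) = cis (of_int (b1 - fst a) * t) * ha m n a b1 b2 w"
proof -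
  have m: "mono a (cis t * fst w, snd w) = cis (of_int (fst a) * t) * mono a w"
    by (simp add: mono_def power_int_mult_distrib cis_power_int)
  have f: "fb b1 b2 (cis t * fst w, snd w) = cis (of_int b1 * t) * fb b1 b2 w"
    by (simp add: fb_def power_int_mult_distrib cis_power_int)
  have e: "cnj (cis (of_int (fst a) * t)) * cis (of_int b1 * t) = cis (of_int (b1 - fst a) * t)"
    by (simp add: cis_cnj cis_mult algebra_simps)
  have "ha m n a b1 b2 (cis t * fst w, snd w) = (cnj (cis (of_int (fst a) * t)) * cis (of_int b1 * t)) * ha m n a b1 b2 w"
    unfolding ha_def m f ind_rot1 by (simp only: complex_cnj_mult mult_ac)
  then show ?thesis by (simp only: e)
qed

lemma ha_rot2: "ha m n a b1 b2 (fst w, cis t * snd w) = cis (- of_int (snd a + b2) * t) * ha m n a b1 b2 w"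
proof -
  have m: "mono a (fst w, cis t * snd w) = cis (of_int (snd a) * t) * mono a w"
    by (simp add: mono_def power_int_mult_distrib cis_power_int algebra_simps)
  have f: "fb b1 b2 (fst w, cis t * snd w) = cis (- of_int b2 * t) * fb b1 b2 w"
    by (simp add: fb_def power_int_mult_distrib cis_power_int cis_cnj complex_cnj_power_int algebra_simps)
  have e: "cnj (cis (of_int (snd a) * t)) * cis (- of_int b2 * t) = cis (- of_int (snd a + b2) * t)"
    by (simp add: cis_cnj cis_mult algebra_simps)
  have "ha m n a b1 b2 (fst w, cis t * snd w) = (cnj (cis (of_int (snd a) * t)) * cis (- of_int b2 * t)) * ha m n a b1 b2 w"
    unfolding ha_def m f ind_rot2 by (simp only: complex_cnj_mult mult_ac)
  then show ?thesis by (simp only: e)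
qed

lemma zero_by_rot:
  fixes I :: complex
  assumes "I = cis x * I" "cis x \<noteq> 1" shows "I = 0"
proof -
  have "(1 - cis x) * I = 0" using assms(1) by (simp add: algebra_simps)
  with assms(2) show ?thesis by simp
qed

lemma orth:
  assumes "a \<noteq> (b1, - b2)"
  shows "(\<integral>w. ha m n a b1 b2 w \<partial>lborel) = 0"
proof (cases "b1 - fst a = 0")
  case False
  then obtain t where t: "cis t \<noteq> -1" "cis (of_int (b1 - fst a) * t) \<noteq> 1"
    using exists_theta by blast
  have "(\<integral>w. ha m n a b1 b2 w \<partial>lborel) = (\<integral>w. ha m n a b1 b2 (cis t * fst w, snd w) \<partial>lborel)"
    by (rule integral_rot1[symmetric]) (use t in auto)
  also have "\<dots> = cis (of_int (b1 - fst a) * t) * (\<integral>w. ha m n a b1 b2 w \<partial>lborel)"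
    by (simp add: ha_rot1)
  finally show ?thesis using zero_by_rot t(2) by blast
next
  case True
  then have "snd a + b2 \<noteq> 0" using assms by (cases a) auto
  then have "- (snd a + b2) \<noteq> 0" by simp
  then obtain t where t: "cis t \<noteq> -1" "cis (of_int (- (snd a + b2)) * t) \<noteq> 1"
    using exists_theta by blast
  have "(\<integral>w. ha m n a b1 b2 w \<partial>lborel) = (\<integral>w. ha m n a b1 b2 (fst w, cis t * snd w) \<partial>lborel)"
    by (rule integral_rot2[symmetric]) (use t in auto)
  also have "\<dots> = cis (of_int (- (snd a + b2)) * t) * (\<integral>w. ha m n a b1 b2 w \<partial>lborel)"
    by (simp add: ha_rot2)
  finally show ?thesis using zero_by_rot t(2) by blast
qed



lemma emeasure_cball_C: "r \<ge> 0 \<Longrightarrow> emeasure lborel (cball (0::complex) r) = ennreal (pi * r\<^sup>2)"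
  using emeasure_cball[of r "0::complex"] by (simp add: unit_ball_vol_2)

lemma emeasure_ball_C: "r \<ge> 0 \<Longrightarrow> emeasure lborel (ball (0::complex) r) = ennreal (pi * r\<^sup>2)"
  using emeasure_ball[of r "0::complex"] by (simp add: unit_ball_vol_2)

definition Vab :: "real \<Rightarrow> real \<Rightarrow> ennreal" where
  "Vab a b = (if a \<le> b then ennreal (pi * (max b 0)\<^sup>2 - pi * (max a 0)\<^sup>2) else 0)"

lemma emeasure_annulus: "emeasure lborel {w::complex. a \<le> cmod w \<and> cmod w \<le> b} = Vab a b"
proof (cases "a \<le> b")
  case False
  then have e: "{w::complex. a \<le> cmod w \<and> cmod w \<le> b} = {}" by auto
  show ?thesis unfolding e using False by (simp add: Vab_def)
next
  case True
  show ?thesis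
  proof (cases "b < 0")
    case True
    then have e: "{w::complex. a \<le> cmod w \<and> cmod w \<le> b} = {}" by (auto dest: order.trans[OF norm_ge_zero])
    show ?thesis unfolding e using True \<open>a \<le> b\<close> by (simp add: Vab_def max_def)
  next
    case False
    show ?thesis
    proof (cases "a \<le> 0")
      case True
      then have "{w::complex. a \<le> cmod w \<and> cmod w \<le> b} = cball 0 b"
        by (auto simp: cball_def dist_norm intro: order.trans[OF True])
      then show ?thesis using True False \<open>a \<le> b\<close> by (simp add: Vab_def emeasure_cball_C max_def)
    next
      case a0: False
      have eq: "{w::complex. a \<le> cmod w \<and> cmod w \<le> b} = cball 0 b - ball 0 a"
        by (auto simp: cball_def ball_def dist_norm)
      have "emeasure lborel (cball (0::complex) b - ball 0 a) = emeasure lborel (cball (0::complex) b) - emeasure lborel (ball (0::complex) a)"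
        using \<open>a \<le> b\<close> a0 by (intro emeasure_Diff) (auto simp: emeasure_ball_C)
      also have "\<dots> = ennreal (pi * b\<^sup>2 - pi * a\<^sup>2)"
        using a0 False by (simp add: emeasure_cball_C emeasure_ball_C ennreal_minus)
      finally show ?thesis using eq a0 False \<open>a \<le> b\<close> by (simp add: Vab_def max_def)
    qed
  qed
qed

lemma density_Icc: "emeasure (density lborel (\<lambda>r::real. ennreal (2*pi*r))) {a..b} = Vab a b"
proof -
  have "emeasure (density lborel (\<lambda>r::real. ennreal (2*pi*r))) {a..b} = (\<integral>\<^sup>+r. ennreal (2*pi*r) * indicator {a..b} r \<partial>lborel)"
    by (subst emeasure_density) auto
  also have "\<dots> = (\<integral>\<^sup>+r. ennreal (2*pi*r) * indicator {max a 0..max b 0} r \<partial>lborel)"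
  proof (intro nn_integral_cong)
    fix r :: real
    show "ennreal (2*pi*r) * indicator {a..b} r = ennreal (2*pi*r) * indicator {max a 0..max b 0} r"
    proof (cases "r \<le> 0")
      case True
      then have "ennreal (2*pi*r) = 0" by (intro ennreal_neg) (simp add: mult_nonneg_nonpos)
      then show ?thesis by simp
    qed (auto simp: indicator_def)
  qed
  also have "\<dots> = Vab a b"
  proof (cases "a \<le> b")
    case True
    have "(\<integral>\<^sup>+r. ennreal (2*pi*r) * indicator {max a 0..max b 0} r \<partial>lborel) = ennreal (pi * (max b 0)\<^sup>2 - pi * (max a 0)\<^sup>2)"
      by (rule nn_integral_FTC_Icc[where F="\<lambda>x. pi * x\<^sup>2"]) (use True in \<open>auto intro!: derivative_eq_intros simp: max_def split: if_splits\<close>)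
    then show ?thesis using True by (simp add: Vab_def)
  next
    case False
    then have "{max a 0..max b 0} \<subseteq> {0}" by auto
    then have z: "ennreal (2*pi*r) * indicator {max a 0..max b 0} r = 0" for r
      using False by (cases "r \<in> {max a 0..max b 0}") auto
    show ?thesis using False by (simp add: Vab_def z)
  qed
  finally show ?thesis .
qed

lemma distr_cmod: "distr lborel borel (\<lambda>w::complex. cmod w) = density lborel (\<lambda>r::real. ennreal (2*pi*r))"
proof (rule measure_eqI_generator_eq_countable[where E="range (\<lambda>(a,b). {a..b})" and \<Omega>=UNIV
      and A="range (\<lambda>n::nat. {- real n..real n})"])
  show "Int_stable (range (\<lambda>(a, b). {a..b::real}))"
    by (auto simp: Int_stable_def)
  show "range (\<lambda>(a, b). {a..b::real}) \<subseteq> Pow UNIV" by simp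
  show "sets (distr lborel borel (\<lambda>w::complex. cmod w)) = sigma_sets UNIV (range (\<lambda>(a, b). {a..b}))"
    by (simp add: borel_eq_atLeastAtMost)
  show "sets (density lborel (\<lambda>r::real. ennreal (2*pi*r))) = sigma_sets UNIV (range (\<lambda>(a, b). {a..b}))"
    by (simp add: borel_eq_atLeastAtMost)
  show "range (\<lambda>n::nat. {- real n..real n}) \<subseteq> range (\<lambda>(a, b). {a..b})" by auto
  show "\<Union> (range (\<lambda>n::nat. {- real n..real n})) = UNIV"
  proof (intro set_eqI iffI)
    fix x :: real
    obtain n :: nat where "\<bar>x\<bar> \<le> real n" using real_arch_simple by blast
    then show "x \<in> \<Union> (range (\<lambda>n::nat. {- real n..real n}))" by (intro UN_I[of n]) auto
  qed auto
  show "countable (range (\<lambda>n::nat. {- real n..real n}))" by simp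
  have em: "emeasure (distr lborel borel (\<lambda>w::complex. cmod w)) {a..b} = Vab a b" for a b
  proof -
    have "emeasure (distr lborel borel (\<lambda>w::complex. cmod w)) {a..b} = emeasure lborel {w::complex. a \<le> cmod w \<and> cmod w \<le> b}"
      by (subst emeasure_distr) (auto simp: vimage_def)
    then show ?thesis by (simp add: emeasure_annulus)
  qed
  show "emeasure (distr lborel borel (\<lambda>w::complex. cmod w)) X = emeasure (density lborel (\<lambda>r::real. ennreal (2*pi*r))) X"
    if "X \<in> range (\<lambda>(a, b). {a..b})" for X
    using that by (auto simp: em density_Icc)
  show "emeasure (distr lborel borel (\<lambda>w::complex. cmod w)) X \<noteq> \<infinity>" if "X \<in> range (\<lambda>n::nat. {- real n..real n})" for X
    using that by (auto simp: em Vab_def)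
qed

lemma radial:
  fixes \<phi> :: "real \<Rightarrow> ennreal"
  assumes [measurable]: "\<phi> \<in> borel_measurable borel"
  shows "(\<integral>\<^sup>+w. \<phi> (cmod w) \<partial>(lborel :: complex measure)) = (\<integral>\<^sup>+r. ennreal (2*pi*r) * \<phi> r \<partial>lborel)"
proof -
  have "(\<integral>\<^sup>+w. \<phi> (cmod w) \<partial>(lborel :: complex measure)) = (\<integral>\<^sup>+r. \<phi> r \<partial>distr lborel borel (\<lambda>w::complex. cmod w))"
    by (subst nn_integral_distr) auto
  also have "\<dots> = (\<integral>\<^sup>+r. ennreal (2*pi*r) * \<phi> r \<partial>lborel)"
    unfolding distr_cmod by (subst nn_integral_density) auto
  finally show ?thesis .
qed



lemma powr_lt_iff_T:
  fixes r1 r2 e :: real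
  assumes "0 \<le> r1" "0 < r2" "0 < e"
  shows "(r1 powr e < r2) = (r1 < r2 powr (1/e))"
proof
  assume "r1 powr e < r2"
  then have "(r1 powr e) powr (1/e) < r2 powr (1/e)"
    using assms by (intro powr_less_mono2) auto
  then show "r1 < r2 powr (1/e)" using assms by (simp add: powr_powr)
next
  assume "r1 < r2 powr (1/e)"
  then have "r1 powr e < (r2 powr (1/e)) powr e"
    using assms by (intro powr_less_mono2) auto
  then show "r1 powr e < r2" using assms by (simp add: powr_powr)
qed

lemma inner_int:
  fixes r2 e C :: real and p :: nat
  assumes "0 < r2" "0 < e" "0 \<le> C"
  shows "(\<integral>\<^sup>+r1. ennreal (2*pi*r1) * ennreal (indicator {r. r powr e < r2} r1 * (r1^p * C)) \<partial>lborel)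
       = ennreal (2*pi*C*(r2 powr (1/e))^(p+2)/(p+2))"
proof -
  define T where "T = r2 powr (1/e)"
  have T0: "0 < T" using assms by (simp add: T_def)
  have "(\<integral>\<^sup>+r1. ennreal (2*pi*r1) * ennreal (indicator {r. r powr e < r2} r1 * (r1^p * C)) \<partial>lborel)
      = (\<integral>\<^sup>+r1. ennreal (2*pi*C*r1^(p+1)) * indicator {0..T} r1 \<partial>lborel)"
  proof (rule nn_integral_cong_AE)
    show "AE r1 in lborel. ennreal (2*pi*r1) * ennreal (indicator {r. r powr e < r2} r1 * (r1^p * C))
        = ennreal (2*pi*C*r1^(p+1)) * indicator {0..T} r1"
      using AE_lborel_singleton[of T]
    proof eventually_elim
      case (elim r1)
      show ?case
      proof (cases "r1 < 0")
        case True
        then have "ennreal (2*pi*r1) = 0" by (intro ennreal_neg) (simp add: mult_nonneg_nonpos)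
        then show ?thesis using True by (simp add: indicator_def)
      next
        case False
        then have r0: "0 \<le> r1" by simp
        have iff: "(r1 powr e < r2) = (r1 < T)" unfolding T_def using powr_lt_iff_T[OF r0 assms(1,2)] .
        show ?thesis using elim r0 assms
          by (auto simp: indicator_def iff ennreal_mult[symmetric] algebra_simps power_Suc)
      qed
    qed
  qed
  also have "\<dots> = ennreal (2*pi*C*T^(p+2)/(p+2) - 2*pi*C*0^(p+2)/(p+2))"
  proof (rule nn_integral_FTC_Icc[where F="\<lambda>x. 2*pi*C*x^(p+2)/(p+2)"])
    fix x :: real
    have d: "DERIV (\<lambda>x. 2*pi*C*x^(p+2)/(p+2)) x :> 2*pi*C*(real (p+2) * x^(p+2 - Suc 0))/(p+2)"
      by (intro DERIV_cdivide DERIV_cmult DERIV_pow)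
    have eq: "2*pi*C*(real (p+2) * x^(p+2 - Suc 0))/(p+2) = 2*pi*C*x^(p+1)"
      by (simp add: field_simps)
    show "DERIV (\<lambda>x. 2*pi*C*x^(p+2)/(p+2)) x :> 2*pi*C*x^(p+1)"
      using d unfolding eq .
    assume "x \<in> {0..T}"
    then show "0 \<le> 2*pi*C*x^(p+1)" using assms(3) by simp
  qed (use T0 in auto)
  finally show ?thesis by (simp add: T_def)
qed



lemma outer_int:
  fixes e K :: real
  assumes "e > -1" "K \<ge> 0"
  shows "(\<integral>\<^sup>+r. ennreal (K * r powr e) * indicator {0<..<1} r \<partial>lborel) = ennreal (K / (e+1))"
proof -
  have "(\<integral>\<^sup>+r. ennreal (K * r powr e) * indicator {0<..<1} r \<partial>lborel)
      = (\<integral>\<^sup>+r. ennreal (indicator {0..1} r * (K * r powr e)) \<partial>lborel)"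
  proof (rule nn_integral_cong_AE)
    show "AE r in lborel. ennreal (K * r powr e) * indicator {0<..<1} r = ennreal (indicator {0..1} r * (K * r powr e))"
      using AE_lborel_singleton[of 0] AE_lborel_singleton[of 1]
      by eventually_elim (auto simp: indicator_def)
  qed
  also have "\<dots> = ennreal (K * (1 powr (e + 1) / (e + 1)))"
  proof (rule nn_integral_has_integral_lebesgue)
    show "((\<lambda>r. K * r powr e) has_integral K * (1 powr (e + 1) / (e + 1))) {0..1}"
      by (intro has_integral_mult_right has_integral_powr_from_0) (use assms in auto)
  qed (use assms in auto)
  finally show ?thesis by simp
qed

lemma Hdom_iff: "((w1, w2) \<in> Hdom m n) = (cmod w1 powr (real m / real n) < cmod w2 \<and> cmod w2 < 1)"
  by (simp add: Hdom_def)

lemma J_int: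
  fixes p :: nat and q :: real
  assumes m: "m > 0" and n: "n > 0" and e: "q + 2 + (real n / real m) * (p+2) > 0"
  shows "(\<integral>\<^sup>+w. ennreal (indicator (Hdom m n) w * (cmod (fst w)^p * cmod (snd w) powr q)) \<partial>lborel)
       = ennreal (4*pi^2 / ((p+2) * (q + 2 + (real n / real m)*(p+2))))"
proof -
  define g where "g w = ennreal (indicator (Hdom m n) w * (cmod (fst w)^p * cmod (snd w) powr q))" for w
  have gm[measurable]: "g \<in> borel_measurable borel" unfolding g_def by measurable
  define \<Psi> where "\<Psi> s = ennreal (2*pi*(s powr q)*(s powr (real n / real m))^(p+2)/(p+2)) * indicator {0<..<1} s" for s :: real
  have inner: "(\<integral>\<^sup>+w1. g (w1, w2) \<partial>lborel) = \<Psi> (cmod w2)" for w2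
  proof -
    define C where "C = indicator {y. y < 1} (cmod w2) * cmod w2 powr q"
    have C0: "C \<ge> 0" by (simp add: C_def indicator_def)
    have "(\<integral>\<^sup>+w1. g (w1, w2) \<partial>lborel) = (\<integral>\<^sup>+w1. ennreal (indicator {r. r powr (real m / real n) < cmod w2} (cmod w1) * (cmod w1^p * C)) \<partial>lborel)"
      by (intro nn_integral_cong) (simp add: g_def C_def indicator_def Hdom_iff)
    also have "\<dots> = (\<integral>\<^sup>+r1. ennreal (2*pi*r1) * ennreal (indicator {r. r powr (real m / real n) < cmod w2} r1 * (r1^p * C)) \<partial>lborel)"
      by (rule radial) measurable
    also have "\<dots> = \<Psi> (cmod w2)"
    proof (cases "w2 = 0")
      case True
      have "indicator {r. r powr (real m / real n) < cmod w2} r1 = (0::real)" for r1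
        using True by (simp add: indicator_def)
      then show ?thesis using True by (simp add: \<Psi>_def)
    next
      case False
      then have "0 < cmod w2" by simp
      from inner_int[OF this _ C0, of "real m / real n" p] m n
      have "(\<integral>\<^sup>+r1. ennreal (2*pi*r1) * ennreal (indicator {r. r powr (real m / real n) < cmod w2} r1 * (r1^p * C)) \<partial>lborel)
          = ennreal (2*pi*C*(cmod w2 powr (real n / real m))^(p+2)/(p+2))" by simp
      also have "\<dots> = \<Psi> (cmod w2)"
        using False by (cases "cmod w2 < 1") (simp_all add: \<Psi>_def C_def indicator_def)
      finally show ?thesis .
    qed
    finally show ?thesis .
  qed
  have "(\<integral>\<^sup>+w. g w \<partial>lborel) = (\<integral>\<^sup>+w. g w \<partial>(lborel \<Otimes>\<^sub>M lborel))"
    by (simp add: lborel_prod)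
  also have "\<dots> = (\<integral>\<^sup>+w2. \<integral>\<^sup>+w1. g (w1, w2) \<partial>lborel \<partial>lborel)"
    by (rule lborel_pair.nn_integral_snd[symmetric]) (unfold lborel_prod, use gm in simp)
  also have "\<dots> = (\<integral>\<^sup>+w2. \<Psi> (cmod w2) \<partial>lborel)"
    by (simp add: inner)
  also have "\<dots> = (\<integral>\<^sup>+x. ennreal (2*pi*x) * \<Psi> x \<partial>lborel)"
    by (rule radial) (simp add: \<Psi>_def)
  also have "\<dots> = (\<integral>\<^sup>+s. ennreal (4*pi^2/(p+2) * s powr (q + 1 + (real n / real m)*(p+2))) * indicator {0<..<1} s \<partial>lborel)"
  proof (intro nn_integral_cong)
    fix s :: real
    show "ennreal (2*pi* s) * \<Psi> s = ennreal (4*pi^2/(p+2) * s powr (q + 1 + (real n / real m)*(p+2))) * indicator {0<..<1} s"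
    proof (cases "0 < s \<and> s < 1")
      case True
      have "(s powr (real n / real m))^(p+2) = s powr ((real n / real m) * (p+2))"
      proof -
        have "(s powr (real n / real m))^(p+2) = (s powr (real n / real m)) powr (real (p+2))"
          using True by (subst powr_realpow) auto
        also have "\<dots> = s powr ((real n / real m) * (p+2))" by (simp add: powr_powr)
        finally show ?thesis .
      qed
      moreover have "s powr (q + 1 + (real n / real m)*(p+2)) = s powr q * s * s powr ((real n / real m) * (p+2))"
        using True by (simp add: powr_add)
      ultimately show ?thesis using True
        by (simp add: \<Psi>_def ennreal_mult[symmetric] power2_eq_square field_simps)
    qed (auto simp: \<Psi>_def indicator_def)
  qed
  also have "\<dots> = ennreal (4*pi^2/(p+2) / ((q + 1 + (real n / real m)*(p+2)) + 1))"
    by (rule outer_int) (use e in auto)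
  also have "\<dots> = ennreal (4*pi^2 / ((p+2) * (q + 2 + (real n / real m)*(p+2))))"
    by (simp add: field_simps)
  finally show ?thesis unfolding g_def .
qed



definition Jv :: "nat \<Rightarrow> nat \<Rightarrow> nat \<Rightarrow> real \<Rightarrow> real" where
  "Jv m n p q = 4*pi^2 / (real (p+2) * (q + 2 + (real n / real m) * real (p+2)))"

lemma summable_Suc_pow:
  fixes X :: real assumes "0 \<le> X" "X < 1"
  shows "summable (\<lambda>k. real (Suc k) * X^k)"
proof -
  have "summable (\<lambda>k. diffs (\<lambda>_. 1::real) k * X^k)"
    by (rule termdiff_converges[where K=1]) (use assms in \<open>auto intro: summable_geometric\<close>)
  then show ?thesis by (simp add: diffs_def)
qed

lemma Hdom_snd_pos: "w \<in> Hdom m n \<Longrightarrow> 0 < cmod (snd w)"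
  by (cases w) (auto simp: Hdom_def intro: le_less_trans[OF powr_ge_zero])

lemma norm_powi_pos: "0 < cmod x \<Longrightarrow> cmod (x powi k) = cmod x powr (real_of_int k)"
  by (simp add: norm_power_int powr_real_of_int')

lemma norm_powi_nonneg: "0 \<le> k \<Longrightarrow> cmod (x powi k) = cmod x ^ nat k"
proof -
  assume "0 \<le> k"
  then have "k = int (nat k)" by simp
  then have "x powi k = x ^ nat k" by (metis power_int_of_nat)
  then show ?thesis by (simp add: norm_power)
qed

lemma norm_mono_H:
  assumes "w \<in> Hdom m n" "0 \<le> fst a"
  shows "cmod (mono a w) = cmod (fst w) ^ nat (fst a) * cmod (snd w) powr (snd a)"
  using Hdom_snd_pos[OF assms(1)] assms(2)
  by (simp add: mono_def norm_mult norm_powi_nonneg norm_powi_pos)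

lemma norm_fb_H:
  assumes "w \<in> Hdom m n" "0 \<le> b1"
  shows "cmod (fb b1 b2 w) = cmod (fst w) ^ nat b1 * cmod (snd w) powr b2"
proof -
  have "0 < cmod (cnj (snd w))" using Hdom_snd_pos[OF assms(1)] by simp
  then show ?thesis using assms(2)
    by (simp add: fb_def norm_mult norm_powi_nonneg norm_powi_pos)
qed

lemma A2_pos:
  assumes "a \<in> A2 m n" "m > 0" "n > 0"
  shows "0 \<le> fst a" "real_of_int (snd a) + 2 + (real n / real m) * real (nat (fst a) + 2) > 0"
    "2 * real_of_int (snd a) + 2 + (real n / real m) * real (2 * nat (fst a) + 2) > 0"
proof -
  obtain a1 a2 where a: "a = (a1, a2)" by force
  from assms(1) have h: "a1 \<ge> 0" "int n * a1 + int m * a2 \<ge> - int m - int n + 1" by (auto simp: A2_def a)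
  then show "0 \<le> fst a" by (simp add: a)
  have "real n * real_of_int a1 + real m * real_of_int a2 \<ge> - real m - real n + 1"
    using h(2) by (metis (mono_tags, opaque_lifting) of_int_add of_int_diff of_int_le_iff of_int_minus of_int_mult of_int_of_nat_eq of_int_1)
  then have key: "real m * (real_of_int a2 + 1) + real n * (real_of_int a1 + 1) > 0" by (simp add: algebra_simps)
  have e: "real_of_int a2 + 2 + (real n / real m) * real (nat a1 + 2) = (real m * (real_of_int a2 + 2) + real n * (real_of_int a1 + 2)) / real m"
    using assms(2) h(1) by (simp add: field_simps)
  have "real m * (real_of_int a2 + 2) + real n * (real_of_int a1 + 2) > 0" using key assms(2,3) by (simp add: algebra_simps)
  then show "real_of_int (snd a) + 2 + (real n / real m) * real (nat (fst a) + 2) > 0"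
    unfolding a fst_conv snd_conv e using assms(2) by simp
  have e2: "2 * real_of_int a2 + 2 + (real n / real m) * real (2 * nat a1 + 2) = 2 * (real m * (real_of_int a2 + 1) + real n * (real_of_int a1 + 1)) / real m"
    using assms(2) h(1) by (simp add: field_simps)
  show "2 * real_of_int (snd a) + 2 + (real n / real m) * real (2 * nat (fst a) + 2) > 0"
    unfolding a fst_conv snd_conv e2 using assms(2) key by simp
qed

lemma mono_meas[measurable]: "mono a \<in> borel_measurable borel"
  unfolding mono_def by measurable

lemma norm2_eq:
  assumes "a \<in> A2 m n" "m > 0" "n > 0"
  shows "mono_norm2 m n a = Jv m n (2 * nat (fst a)) (2 * real_of_int (snd a))"
    and "Jv m n (2 * nat (fst a)) (2 * real_of_int (snd a)) > 0"
proof -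
  note pos = A2_pos[OF assms]
  have eq: "ennreal (indicator (Hdom m n) w *\<^sub>R (cmod (mono a w))\<^sup>2)
      = ennreal (indicator (Hdom m n) w * (cmod (fst w)^(2 * nat (fst a)) * cmod (snd w) powr (2 * real_of_int (snd a))))" for w
  proof (cases "w \<in> Hdom m n")
    case True
    have "(cmod (snd w) powr real_of_int (snd a))\<^sup>2 = cmod (snd w) powr (2 * real_of_int (snd a))"
      by (simp add: powr_powr[symmetric] powr_realpow[symmetric] Hdom_snd_pos[OF True] power2_eq_square powr_add[symmetric])
    then show ?thesis using True pos(1)
      by (simp add: norm_mono_H power_mult_distrib power_mult[symmetric] mult.commute)
  qed simp
  have "mono_norm2 m n a = enn2real (\<integral>\<^sup>+w. ennreal (indicator (Hdom m n) w *\<^sub>R (cmod (mono a w))\<^sup>2) \<partial>lborel)"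
    unfolding mono_norm2_def set_lebesgue_integral_def
    by (rule integral_eq_nn_integral) (auto simp: indicator_def)
  also have "\<dots> = enn2real (ennreal (Jv m n (2 * nat (fst a)) (2 * real_of_int (snd a))))"
    unfolding eq Jv_def by (simp only: J_int[OF assms(2) assms(3) pos(3)])
  finally show "mono_norm2 m n a = Jv m n (2 * nat (fst a)) (2 * real_of_int (snd a))"
    using pos(3) by (simp add: Jv_def)
  show "Jv m n (2 * nat (fst a)) (2 * real_of_int (snd a)) > 0"
    using pos(3) by (simp add: Jv_def)
qed



lemma sum_bound_pairs:
  fixes A B :: "nat \<Rightarrow> real" and c0 :: real and G :: "'a set" and \<phi> :: "'a \<Rightarrow> nat \<times> nat" and T :: "'a \<Rightarrow> real"
  assumes sA: "summable A" and sB: "summable B" and A0: "\<And>k. A k \<ge> 0" and B0: "\<And>j. B j \<ge> 0" and c0: "c0 \<ge> 0"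
    and inj: "inj_on \<phi> G"
    and le: "\<And>a. a \<in> G \<Longrightarrow> T a \<le> c0 * A (fst (\<phi> a)) * B (snd (\<phi> a))"
  shows "(\<integral>\<^sup>+a. ennreal (T a) \<partial>count_space G) < \<infinity>"
proof -
  define U where "U b = ennreal (c0 * A (fst b) * B (snd b))" for b
  have "(\<integral>\<^sup>+a. ennreal (T a) \<partial>count_space G) \<le> (\<integral>\<^sup>+a. U (\<phi> a) \<partial>count_space G)"
    by (intro nn_integral_mono) (auto simp: U_def le intro!: ennreal_leI)
  also have "\<dots> = (\<integral>\<^sup>+b. U b \<partial>count_space (\<phi> ` G))"
    by (rule nn_integral_bij_count_space) (rule inj_on_imp_bij_betw[OF inj])
  also have "\<dots> = (\<integral>\<^sup>+b. U b * indicator (\<phi> ` G) b \<partial>count_space UNIV)"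
    by (rule nn_integral_count_space_indicator) simp
  also have "\<dots> \<le> (\<integral>\<^sup>+b. U b \<partial>count_space UNIV)"
    by (intro nn_integral_mono) (auto simp: indicator_def)
  also have "\<dots> = (\<integral>\<^sup>+b. U b \<partial>(count_space UNIV \<Otimes>\<^sub>M count_space UNIV))"
    by (simp add: pair_measure_countable)
  also have "\<dots> = (\<integral>\<^sup>+k. \<integral>\<^sup>+j. U (k, j) \<partial>count_space UNIV \<partial>count_space UNIV)"
  proof -
    interpret S: sigma_finite_measure "count_space (UNIV::nat set)"
      by (intro sigma_finite_measure_count_space_countable) auto
    show ?thesis by (rule S.nn_integral_fst[symmetric]) (simp add: pair_measure_countable)
  qed
  also have "\<dots> = (\<integral>\<^sup>+k. ennreal (c0 * A k) * (\<integral>\<^sup>+j. ennreal (B j) \<partial>count_space UNIV) \<partial>count_space UNIV)"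
    using c0 A0 B0
    by (intro nn_integral_cong) (simp add: U_def ennreal_mult nn_integral_cmult[symmetric] mult_nonneg_nonneg)
  also have "\<dots> = (\<integral>\<^sup>+k. ennreal (c0 * A k) \<partial>count_space UNIV) * (\<integral>\<^sup>+j. ennreal (B j) \<partial>count_space UNIV)"
    by (simp add: nn_integral_multc)
  also have "\<dots> = ennreal (c0 * suminf A) * ennreal (suminf B)"
  proof -
    have "(\<integral>\<^sup>+k. ennreal (c0 * A k) \<partial>count_space UNIV) = ennreal (suminf (\<lambda>k. c0 * A k))"
      using sA A0 c0 by (simp add: nn_integral_count_space_nat suminf_ennreal2 summable_mult)
    moreover have "(\<integral>\<^sup>+j. ennreal (B j) \<partial>count_space UNIV) = ennreal (suminf B)"
      using sB B0 by (simp add: nn_integral_count_space_nat suminf_ennreal2)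
    ultimately show ?thesis using sA by (simp add: suminf_mult)
  qed
  also have "\<dots> < \<infinity>" by (simp add: ennreal_mult_less_top)
  finally show ?thesis .
qed



definition Fa :: "nat \<Rightarrow> nat \<Rightarrow> int \<Rightarrow> int \<Rightarrow> complex \<times> complex \<Rightarrow> int \<times> int \<Rightarrow> complex \<times> complex \<Rightarrow> complex" where
  "Fa m n b1 b2 z a w = mono a z / complex_of_real (mono_norm2 m n a) * ha m n a b1 b2 w"

lemma A2_D:
  assumes "a \<in> A2 m n"
  shows "fst a \<ge> 0" "real n * real_of_int (fst a) + real m * real_of_int (snd a) \<ge> - real m - real n + 1"
proof -
  obtain a1 a2 where a: "a = (a1, a2)" by force
  from assms have h: "a1 \<ge> 0" "int n * a1 + int m * a2 \<ge> - int m - int n + 1" by (auto simp: A2_def a)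
  show "fst a \<ge> 0" using h by (simp add: a)
  have "real_of_int (int n * a1 + int m * a2) \<ge> real_of_int (- int m - int n + 1)"
    using h(2) by linarith
  then show "real n * real_of_int (fst a) + real m * real_of_int (snd a) \<ge> - real m - real n + 1"
    by (simp add: a)
qed

lemma sum_pos:
  assumes "a \<in> A2 m n" "(b1, b2) \<in> A2 m n" "m > 0" "n > 0"
  shows "real_of_int (snd a + b2) + 2 + real n / real m * real (nat (fst a + b1) + 2) > 0"
    and "real m * (real_of_int (snd a + b2) + 2) + real n * real (nat (fst a + b1) + 2) \<ge> 2"
proof -
  note da = A2_D[OF assms(1)] and db = A2_D[OF assms(2)]
  have nb: "real (nat (fst a + b1)) = real_of_int (fst a) + real_of_int b1" using da db by simp
  show ge: "real m * (real_of_int (snd a + b2) + 2) + real n * real (nat (fst a + b1) + 2) \<ge> 2"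
    using da(2) db(2) unfolding of_nat_add nb by (simp add: algebra_simps)
  have "real_of_int (snd a + b2) + 2 + real n / real m * real (nat (fst a + b1) + 2)
     = (real m * (real_of_int (snd a + b2) + 2) + real n * real (nat (fst a + b1) + 2)) / real m"
    using assms(3) by (simp add: field_simps)
  then show "real_of_int (snd a + b2) + 2 + real n / real m * real (nat (fst a + b1) + 2) > 0"
    using ge assms(3) by simp
qed

lemma norm_ha:
  assumes "0 \<le> fst a" "0 \<le> b1"
  shows "cmod (ha m n a b1 b2 w) = indicator (Hdom m n) w * (cmod (fst w) ^ nat (fst a + b1) * cmod (snd w) powr real_of_int (snd a + b2))"
proof (cases "w \<in> Hdom m n")
  case True
  have "cmod (ha m n a b1 b2 w) = cmod (mono a w) * cmod (fb b1 b2 w)"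
    using True by (simp add: ha_def norm_mult)
  also have "\<dots> = cmod (fst w) ^ nat (fst a + b1) * cmod (snd w) powr real_of_int (snd a + b2)"
    using assms Hdom_snd_pos[OF True]
    by (simp add: norm_mono_H[OF True] norm_fb_H[OF True] nat_add_distrib power_add powr_add)
  finally show ?thesis using True by simp
qed (simp add: ha_def)

lemma nn_Fa:
  assumes "m > 0" "n > 0" "a \<in> A2 m n" "(b1, b2) \<in> A2 m n"
  shows "(\<integral>\<^sup>+w. ennreal (cmod (Fa m n b1 b2 z a w)) \<partial>lborel)
       = ennreal (cmod (mono a z) / mono_norm2 m n a * Jv m n (nat (fst a + b1)) (real_of_int (snd a + b2)))"
proof -
  have N: "mono_norm2 m n a > 0" using norm2_eq[OF assms(3,1,2)] by simp
  have a0: "0 \<le> fst a" using A2_D[OF assms(3)] by simp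
  have b0: "0 \<le> b1" using A2_D[OF assms(4)] by simp
  have "(\<integral>\<^sup>+w. ennreal (cmod (Fa m n b1 b2 z a w)) \<partial>lborel)
      = (\<integral>\<^sup>+w. ennreal (cmod (mono a z) / mono_norm2 m n a) * ennreal (indicator (Hdom m n) w * (cmod (fst w) ^ nat (fst a + b1) * cmod (snd w) powr real_of_int (snd a + b2))) \<partial>lborel)"
    using N by (intro nn_integral_cong) (simp add: Fa_def norm_mult norm_divide norm_ha[OF a0 b0] ennreal_mult[symmetric])
  also have "\<dots> = ennreal (cmod (mono a z) / mono_norm2 m n a) * (\<integral>\<^sup>+w. ennreal (indicator (Hdom m n) w * (cmod (fst w) ^ nat (fst a + b1) * cmod (snd w) powr real_of_int (snd a + b2))) \<partial>lborel)"
    by (rule nn_integral_cmult) measurable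
  also have "\<dots> = ennreal (cmod (mono a z) / mono_norm2 m n a) * ennreal (Jv m n (nat (fst a + b1)) (real_of_int (snd a + b2)))"
    unfolding Jv_def by (simp only: J_int[OF assms(1,2) sum_pos(1)[OF assms(3,4,1,2)]])
  also have "\<dots> = ennreal (cmod (mono a z) / mono_norm2 m n a * Jv m n (nat (fst a + b1)) (real_of_int (snd a + b2)))"
  proof (rule ennreal_mult[symmetric])
    show "0 \<le> cmod (mono a z) / mono_norm2 m n a" using N by simp
    show "0 \<le> Jv m n (nat (fst a + b1)) (real_of_int (snd a + b2))"
      unfolding Jv_def using sum_pos(1)[OF assms(3,4,1,2)] by simp
  qed
  finally show ?thesis .
qed



lemma Hdom_z:
  assumes "z \<in> Hdom m n" "m > 0" "n > 0"
  shows "0 < cmod (snd z)" "cmod (snd z) < 1" "cmod (fst z) < cmod (snd z) powr (real n / real m)"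
proof -
  show s0: "0 < cmod (snd z)" using Hdom_snd_pos[OF assms(1)] .
  show "cmod (snd z) < 1" using assms(1) by (cases z) (simp add: Hdom_def)
  have "cmod (fst z) powr (real m / real n) < cmod (snd z)" using assms(1) by (cases z) (simp add: Hdom_def)
  then show "cmod (fst z) < cmod (snd z) powr (real n / real m)"
    using powr_lt_iff_T[of "cmod (fst z)" "cmod (snd z)" "real m / real n"] s0 assms(2,3) by simp
qed

lemma Jv_le:
  assumes "m > 0" "n > 0" "a \<in> A2 m n" "(b1, b2) \<in> A2 m n"
  shows "Jv m n (nat (fst a + b1)) (real_of_int (snd a + b2)) \<le> pi^2 * real m"
proof -
  define p where "p = nat (fst a + b1)"
  define q where "q = real_of_int (snd a + b2)"
  define D where "D = real m * (q + 2) + real n * real (p + 2)"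
  have D2: "D \<ge> 2" using sum_pos(2)[OF assms(3,4,1,2)] by (simp add: D_def p_def q_def)
  have eq: "q + 2 + real n / real m * real (p + 2) = D / real m" using assms(1) by (simp add: D_def field_simps)
  have p2: "real (p + 2) \<ge> 2" by simp
  have den: "real (p+2) * (D / real m) \<ge> 2 * (2 / real m)"
    using D2 p2 assms(1) by (intro mult_mono divide_right_mono) auto
  have "Jv m n p q = 4*pi^2 / (real (p+2) * (D / real m))" by (simp only: Jv_def eq)
  also have "\<dots> \<le> 4*pi^2 / (2 * (2 / real m))"
    using den assms(1) D2 by (intro divide_left_mono) (auto intro!: divide_pos_pos mult_pos_pos)
  also have "\<dots> = pi^2 * real m" by simp
  finally show ?thesis by (simp add: p_def q_def)
qed

lemma N_eq:
  assumes "m > 0" "n > 0" "a \<in> A2 m n"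
  shows "mono_norm2 m n a = pi^2 * real m / (real (Suc (nat (fst a))) * real (nat (int n * fst a + int m * snd a + int m + int n)))"
    and "real (nat (int n * fst a + int m * snd a + int m + int n)) = real n * real_of_int (fst a) + real m * real_of_int (snd a) + real m + real n"
    and "real n * real_of_int (fst a) + real m * real_of_int (snd a) + real m + real n \<ge> 1"
proof -
  note d = A2_D[OF assms(3)]
  have i1: "int n * fst a + int m * snd a + int m + int n \<ge> 1"
    using assms(3) by (cases a) (auto simp: A2_def)
  show J: "real (nat (int n * fst a + int m * snd a + int m + int n)) = real n * real_of_int (fst a) + real m * real_of_int (snd a) + real m + real n"
  proof -
    have "real (nat (int n * fst a + int m * snd a + int m + int n)) = real_of_int (int n * fst a + int m * snd a + int m + int n)"
      using i1 by (intro of_nat_nat) simp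
    then show ?thesis by simp
  qed
  show ge1: "real n * real_of_int (fst a) + real m * real_of_int (snd a) + real m + real n \<ge> 1" using d(2) by simp
  have k: "real (nat (fst a)) = real_of_int (fst a)" using d by simp
  have "mono_norm2 m n a = Jv m n (2 * nat (fst a)) (2 * real_of_int (snd a))" using norm2_eq[OF assms(3,1,2)] by simp
  also have "\<dots> = 4*pi^2 / ((2 * real_of_int (fst a) + 2) * (2 * real_of_int (snd a) + 2 + real n / real m * (2 * real_of_int (fst a) + 2)))"
    by (simp add: Jv_def k ac_simps)
  also have "\<dots> = pi^2 * real m / ((real_of_int (fst a) + 1) * (real n * real_of_int (fst a) + real m * real_of_int (snd a) + real m + real n))"
  proof -
    define A B where "A = real_of_int (fst a)" "B = real_of_int (snd a)"
    define S where "S = real n * A + real m * B + real m + real n"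
    have S1: "S \<ge> 1" using ge1 by (simp add: S_def A_B_def)
    have A0: "A \<ge> 0" using d(1) by (simp add: A_B_def)
    have e: "(2 * A + 2) * (2 * B + 2 + real n / real m * (2 * A + 2)) = 4 * ((A + 1) * S) / real m"
      using assms(1) by (simp add: S_def field_simps)
    have "4*pi^2 / ((2 * A + 2) * (2 * B + 2 + real n / real m * (2 * A + 2))) = pi^2 * real m / ((A + 1) * S)"
    proof -
      have X: "(A + 1) * S \<noteq> 0" using S1 A0 by auto
      have aux: "X \<noteq> 0 \<Longrightarrow> 4 * pi^2 / (4 * X / real m) = pi^2 * real m / X" for X :: real
        using assms(1) by (simp add: field_simps)
      show ?thesis unfolding e by (rule aux[OF X])
    qed
    then show ?thesis by (simp add: A_B_def S_def)
  qed
  also have "\<dots> = pi^2 * real m / (real (Suc (nat (fst a))) * real (nat (int n * fst a + int m * snd a + int m + int n)))"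
    by (simp only: J) (simp add: k)
  finally show "mono_norm2 m n a = pi^2 * real m / (real (Suc (nat (fst a))) * real (nat (int n * fst a + int m * snd a + int m + int n)))" .
qed



lemma pow_powr: "0 < s \<Longrightarrow> (s powr e)^k = s powr (e * real k)"
proof -
  assume s: "0 < s"
  have "(s powr e)^k = (s powr e) powr (real k)" using s by (subst powr_realpow) auto
  also have "\<dots> = s powr (e * real k)" by (simp add: powr_powr)
  finally show ?thesis .
qed

lemma Ta_bound:
  assumes m: "m > 0" and n: "n > 0" and a: "a \<in> A2 m n" and b: "(b1, b2) \<in> A2 m n" and z: "z \<in> Hdom m n"
  shows "cmod (mono a z) / mono_norm2 m n a * Jv m n (nat (fst a + b1)) (real_of_int (snd a + b2))
    \<le> cmod (snd z) powr (-(real m + real n) / real m)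
       * (real (Suc (nat (fst a))) * (cmod (fst z) * cmod (snd z) powr (-(real n / real m))) ^ nat (fst a))
       * (real (Suc (nat (int n * fst a + int m * snd a + int m + int n))) * (cmod (snd z) powr (1 / real m)) ^ nat (int n * fst a + int m * snd a + int m + int n))"
proof -
  define k where "k = nat (fst a)"
  define j where "j = nat (int n * fst a + int m * snd a + int m + int n)"
  define \<rho> s where "\<rho> = cmod (fst z)" "s = cmod (snd z)"
  have s0: "0 < s" using Hdom_z[OF z m n] by (simp add: \<rho>_s_def)
  note NE = N_eq[OF m n a]
  have Jr: "real j = real n * real_of_int (fst a) + real m * real_of_int (snd a) + real m + real n"
    using NE(2) by (simp add: j_def)
  have Jr1: "real j \<ge> 1" using NE(3) Jr by simp
  have kk: "real k = real_of_int (fst a)" using A2_D[OF a] by (simp add: k_def)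
  define Z where "Z = cmod (mono a z)"
  have Z0: "Z \<ge> 0" by (simp add: Z_def)
  have N: "mono_norm2 m n a = pi^2 * real m / (real (Suc k) * real j)" using NE(1) by (simp add: k_def j_def)
  have Zeq: "Z = s powr (-(real m + real n) / real m) * (\<rho> * s powr (-(real n / real m))) ^ k * (s powr (1 / real m)) ^ j"
  proof -
    have "Z = \<rho> ^ k * s powr (real_of_int (snd a))"
      unfolding Z_def \<rho>_s_def k_def using norm_mono_H[OF z A2_D(1)[OF a]] by simp
    also have "s powr (real_of_int (snd a)) = s powr (-(real m + real n) / real m + (-(real n / real m)) * real k + (1 / real m) * real j)"
      using m unfolding Jr kk by (simp add: field_simps)
    also have "\<dots> = s powr (-(real m + real n) / real m) * (s powr (-(real n / real m))) ^ k * (s powr (1 / real m)) ^ j"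
      by (simp only: powr_add pow_powr[OF s0])
    finally show ?thesis by (simp add: power_mult_distrib)
  qed
  have "Z / mono_norm2 m n a * Jv m n (nat (fst a + b1)) (real_of_int (snd a + b2)) \<le> Z / mono_norm2 m n a * (pi^2 * real m)"
    using Jv_le[OF m n a b] Z0 norm2_eq(2)[OF a m n] norm2_eq(1)[OF a m n]
    by (intro mult_left_mono) auto
  also have "\<dots> = Z * real (Suc k) * real j"
    unfolding N using m Jr1 by (simp add: field_simps)
  also have "\<dots> \<le> Z * real (Suc k) * real (Suc j)"
    using Z0 by (intro mult_left_mono) auto
  also have "\<dots> = s powr (-(real m + real n) / real m) * (real (Suc k) * (\<rho> * s powr (-(real n / real m))) ^ k) * (real (Suc j) * (s powr (1 / real m)) ^ j)"
    unfolding Zeq by (simp add: mult_ac)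
  finally show ?thesis by (simp add: Z_def k_def j_def \<rho>_s_def)
qed



lemma sum_finite:
  assumes m: "m > 0" and n: "n > 0" and G: "G \<subseteq> A2 m n" and b: "(b1, b2) \<in> A2 m n" and z: "z \<in> Hdom m n"
  shows "(\<integral>\<^sup>+a. ennreal (cmod (mono a z) / mono_norm2 m n a * Jv m n (nat (fst a + b1)) (real_of_int (snd a + b2))) \<partial>count_space G) < \<infinity>"
proof -
  define \<rho> s where "\<rho> = cmod (fst z)" "s = cmod (snd z)"
  note hz = Hdom_z[OF z m n]
  have s0: "0 < s" "s < 1" "\<rho> < s powr (real n / real m)" using hz by (simp_all add: \<rho>_s_def)
  define X Y where "X = \<rho> * s powr (-(real n / real m))" "Y = s powr (1 / real m)"
  have X0: "0 \<le> X" by (simp add: X_Y_def \<rho>_s_def)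
  have X1: "X < 1"
  proof -
    have "X < s powr (real n / real m) * s powr (-(real n / real m))"
      unfolding X_Y_def using s0 by (intro mult_strict_right_mono) auto
    also have "\<dots> = 1" using s0 by (simp add: powr_add[symmetric])
    finally show ?thesis .
  qed
  have Y0: "0 \<le> Y" by (simp add: X_Y_def)
  have Y1: "Y < 1"
  proof -
    have "Y < 1 powr (1 / real m)" unfolding X_Y_def using s0 m by (intro powr_less_mono2) auto
    then show ?thesis by simp
  qed
  define \<phi> where "\<phi> a = (nat (fst a), nat (int n * fst a + int m * snd a + int m + int n))" for a :: "int \<times> int"
  have inj: "inj_on \<phi> G"
  proof (rule inj_onI)
    fix a a' assume aG: "a \<in> G" "a' \<in> G" and eq: "\<phi> a = \<phi> a'"
    have i1: "int n * fst a + int m * snd a + int m + int n \<ge> 1" "int n * fst a' + int m * snd a' + int m + int n \<ge> 1"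
      using aG G by (cases a, cases a', auto simp: A2_def)+
    have f0: "fst a \<ge> 0" "fst a' \<ge> 0" using aG G by (auto simp: A2_def)
    from eq have e1: "nat (fst a) = nat (fst a')" and e2: "nat (int n * fst a + int m * snd a + int m + int n) = nat (int n * fst a' + int m * snd a' + int m + int n)"
      by (auto simp: \<phi>_def)
    from e1 f0 have "fst a = fst a'" by simp
    moreover from e2 i1 have "int n * fst a + int m * snd a + int m + int n = int n * fst a' + int m * snd a' + int m + int n" by simp
    ultimately have "int m * snd a = int m * snd a'" by simp
    then have "snd a = snd a'" using m by simp
    with \<open>fst a = fst a'\<close> show "a = a'" by (simp add: prod_eq_iff)
  qed
  show ?thesis
  proof (rule sum_bound_pairs[of "\<lambda>k. real (Suc k) * X^k" "\<lambda>j. real (Suc j) * Y^j"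
        "s powr (-(real m + real n) / real m)" \<phi> G])
    show "summable (\<lambda>k. real (Suc k) * X ^ k)" by (rule summable_Suc_pow[OF X0 X1])
    show "summable (\<lambda>k. real (Suc k) * Y ^ k)" by (rule summable_Suc_pow[OF Y0 Y1])
    show "inj_on \<phi> G" by (rule inj)
    fix a assume "a \<in> G"
    then have "a \<in> A2 m n" using G by auto
    from Ta_bound[OF m n this b z]
    show "cmod (mono a z) / mono_norm2 m n a * Jv m n (nat (fst a + b1)) (real_of_int (snd a + b2))
        \<le> s powr (-(real m + real n) / real m) * (real (Suc (fst (\<phi> a))) * X ^ fst (\<phi> a)) * (real (Suc (snd (\<phi> a))) * Y ^ snd (\<phi> a))"
      by (simp add: \<phi>_def X_Y_def \<rho>_s_def)
  qed (use X0 Y0 in auto)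
qed



lemma infsum_eq_integral_count:
  fixes f :: "'a \<Rightarrow> complex"
  shows "infsum f A = integral\<^sup>L (count_space A) f"
proof (cases "integrable (count_space A) f")
  case True
  then have "Infinite_Set_Sum.abs_summable_on f A" by (simp add: abs_summable_on_def)
  then show ?thesis by (simp add: infsetsum_infsum[symmetric] infsetsum_def)
next
  case False
  then have "\<not> Infinite_Set_Sum.abs_summable_on f A" by (simp add: abs_summable_on_def)
  then have "\<not> Infinite_Sum.abs_summable_on f A" using abs_summable_equivalent by blast
  then have "\<not> f summable_on A" using summable_on_iff_abs_summable_on_complex by blast
  then show ?thesis using False by (simp add: infsum_not_exists not_integrable_integral_eq)
qed

lemma integral_count_single:
  "(\<integral>a. (if a = x then K else 0) \<partial>count_space G) = (if x \<in> G then K else (0::complex))"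
proof -
  have fin: "finite {a \<in> G. (if a = x then K else 0) \<noteq> 0}" by (rule finite_subset[of _ "{x}"]) auto
  show ?thesis
    by (subst lebesgue_integral_count_space_finite_support[OF fin])
       (cases "K = 0"; cases "x \<in> G"; auto simp: Collect_conv_if)
qed

lemma Gset_sub: "Gset m n l \<subseteq> A2 m n" by (auto simp: Gset_def)

lemma countable_G: "countable (Gset m n l)" by simp

lemma main_formula:
  assumes m: "m > 0" and n: "n > 0" and b: "(b1, b2) \<in> A2 m n" and z: "z \<in> Hdom m n"
  shows "Kop m n l (\<lambda>w. fst w powi b1 * cnj (snd w) powi b2) z
       = (if (b1, - b2) \<in> Gset m n l then mono (b1, - b2) z / complex_of_real (mono_norm2 m n (b1, - b2)) * (\<integral>w. ha m n (b1, - b2) b1 b2 w \<partial>lborel) else 0)"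
proof -
  define G where "G = Gset m n l"
  have cG: "countable G" by (simp add: G_def)
  interpret P: pair_sigma_finite "count_space G" lborel
    by (intro pair_sigma_finite.intro sigma_finite_measure_count_space_countable cG lborel.sigma_finite_measure_axioms)
  define F where "F a w = Fa m n b1 b2 z a w" for a w
  have Fm: "(\<lambda>(a, w). F a w) \<in> borel_measurable (count_space G \<Otimes>\<^sub>M lborel)"
  proof (rule measurable_pair_measure_countable1[OF cG])
    fix a show "(\<lambda>w. case (a, w) of (a, w) \<Rightarrow> F a w) \<in> borel_measurable lborel"
      by (simp add: F_def Fa_def)
  qed
  have int: "integrable (count_space G \<Otimes>\<^sub>M lborel) (\<lambda>(a, w). F a w)"
  proof (subst integrable_iff_bounded, intro conjI)
    show "(\<lambda>(a, w). F a w) \<in> borel_measurable (count_space G \<Otimes>\<^sub>M lborel)" by (rule Fm)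
    have "(\<integral>\<^sup>+x. ennreal (norm (case x of (a, w) \<Rightarrow> F a w)) \<partial>(count_space G \<Otimes>\<^sub>M lborel))
        = (\<integral>\<^sup>+a. \<integral>\<^sup>+w. ennreal (norm (F a w)) \<partial>lborel \<partial>count_space G)"
    proof -
      have nm: "(\<lambda>x. ennreal (norm (case x of (a, w) \<Rightarrow> F a w))) \<in> borel_measurable (count_space G \<Otimes>\<^sub>M lborel)"
        using Fm by measurable
      show ?thesis using lborel.nn_integral_fst[OF nm] by simp
    qed
    also have "\<dots> = (\<integral>\<^sup>+a. ennreal (cmod (mono a z) / mono_norm2 m n a * Jv m n (nat (fst a + b1)) (real_of_int (snd a + b2))) \<partial>count_space G)"
    proof (rule nn_integral_cong)
      fix a assume "a \<in> space (count_space G)"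
      then have "a \<in> A2 m n" using Gset_sub by (auto simp: G_def)
      then show "(\<integral>\<^sup>+w. ennreal (norm (F a w)) \<partial>lborel) = ennreal (cmod (mono a z) / mono_norm2 m n a * Jv m n (nat (fst a + b1)) (real_of_int (snd a + b2)))"
        unfolding F_def by (rule nn_Fa[OF m n _ b])
    qed
    also have "\<dots> < \<infinity>" using sum_finite[OF m n _ b z] Gset_sub by (simp add: G_def)
    finally show "(\<integral>\<^sup>+x. ennreal (norm (case x of (a, w) \<Rightarrow> F a w)) \<partial>(count_space G \<Otimes>\<^sub>M lborel)) < \<infinity>" .
  qed
  have pt: "indicator (Hdom m n) w *\<^sub>R (Kker m n l z w * (fst w powi b1 * cnj (snd w) powi b2)) = (\<integral>a. F a w \<partial>count_space G)" for w
  proof -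
    have "Kker m n l z w = (\<integral>a. mono a z * cnj (mono a w) / complex_of_real (mono_norm2 m n a) \<partial>count_space G)"
      unfolding Kker_def G_def by (rule infsum_eq_integral_count)
    define C where "C = (indicator (Hdom m n) w :: complex) * (fst w powi b1 * cnj (snd w) powi b2)"
    have ic: "complex_of_real (indicator A x) = indicator A x" for A x by (simp add: indicator_def)
    have "indicator (Hdom m n) w *\<^sub>R (Kker m n l z w * (fst w powi b1 * cnj (snd w) powi b2)) = Kker m n l z w * C"
      by (simp add: scaleR_conv_of_real C_def ic mult_ac)
    also have "\<dots> = (\<integral>a. mono a z * cnj (mono a w) / complex_of_real (mono_norm2 m n a) \<partial>count_space G) * C"
      using \<open>Kker m n l z w = _\<close> by simp
    also have "\<dots> = (\<integral>a. mono a z * cnj (mono a w) / complex_of_real (mono_norm2 m n a) * C \<partial>count_space G)"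
      by (rule integral_mult_left_zero[symmetric])
    also have "\<dots> = (\<integral>a. F a w \<partial>count_space G)"
      by (intro Bochner_Integration.integral_cong refl) (simp add: F_def Fa_def ha_def fb_def C_def mult_ac)
    finally show ?thesis .
  qed
  have "Kop m n l (\<lambda>w. fst w powi b1 * cnj (snd w) powi b2) z = (\<integral>w. \<integral>a. F a w \<partial>count_space G \<partial>lborel)"
    unfolding Kop_def set_lebesgue_integral_def by (simp add: pt)
  also have "\<dots> = (\<integral>a. \<integral>w. F a w \<partial>lborel \<partial>count_space G)"
    by (rule P.Fubini_integral) (use int in simp)
  also have "\<dots> = (\<integral>a. (if a = (b1, - b2) then mono (b1, - b2) z / complex_of_real (mono_norm2 m n (b1, - b2)) * (\<integral>w. ha m n (b1, - b2) b1 b2 w \<partial>lborel) else 0) \<partial>count_space G)"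
  proof (intro Bochner_Integration.integral_cong refl)
    fix a
    have "(\<integral>w. F a w \<partial>lborel) = mono a z / complex_of_real (mono_norm2 m n a) * (\<integral>w. ha m n a b1 b2 w \<partial>lborel)"
      by (simp add: F_def Fa_def)
    then show "(\<integral>w. F a w \<partial>lborel) = (if a = (b1, - b2) then mono (b1, - b2) z / complex_of_real (mono_norm2 m n (b1, - b2)) * (\<integral>w. ha m n (b1, - b2) b1 b2 w \<partial>lborel) else 0)"
      using orth[of a b1 b2 m n] by auto
  qed
  also have "\<dots> = (if (b1, - b2) \<in> G then mono (b1, - b2) z / complex_of_real (mono_norm2 m n (b1, - b2)) * (\<integral>w. ha m n (b1, - b2) b1 b2 w \<partial>lborel) else 0)"
    by (rule integral_count_single)
  finally show ?thesis by (simp add: G_def)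
qed



theorem proposition4p2:
  fixes m n j :: nat and b1 b2 :: int
  assumes "m > 0" "n > 0" "coprime m n" "j < m"
    and "(b1, b2) \<in> Gset m n j" "(b1, - b2) \<in> Gset m n j"
  shows "\<exists>C :: complex. \<forall>l < m. \<forall>z \<in> Hdom m n.
           Kop m n l (\<lambda>w. fst w powi b1 * cnj (snd w) powi b2) z =
           (if l = j then C * (fst z powi b1 * snd z powi (- b2)) else 0)"
proof -
  have bA2: "(b1, b2) \<in> A2 m n" using assms(5) by (simp add: Gset_def)
  have b'A2: "(b1, - b2) \<in> A2 m n" and bj: "b1 mod int m = int j" using assms(6) assms(4) by (simp_all add: Gset_def)
  define C where "C = (\<integral>w. ha m n (b1, - b2) b1 b2 w \<partial>lborel) / complex_of_real (mono_norm2 m n (b1, - b2))"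
  show ?thesis
  proof (intro exI[of _ C] allI impI ballI)
    fix l z assume l: "l < m" and z: "z \<in> Hdom m n"
    have G: "((b1, - b2) \<in> Gset m n l) = (l = j)"
      using b'A2 bj l by (auto simp: Gset_def)
    show "Kop m n l (\<lambda>w. fst w powi b1 * cnj (snd w) powi b2) z =
           (if l = j then C * (fst z powi b1 * snd z powi (- b2)) else 0)"
      unfolding main_formula[OF assms(1,2) bA2 z] G
      by (simp add: C_def mono_def)
  qed
qed


end
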